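(* Let $\mathcal{H}$ be a complex Hilbert space of finite dimension $n\geq 2$, $m\geq 2$, and let $\rho$ be a density operator on $\mathcal{H}^{\otimes m}$. If $\rho$ is in symmetric state consensus (SSC), then $\rho$ is in reduced state consensus (RSC); and if $\rho$ is in RSC, then $\rho$ is in $\sigma$-expectation consensus ($\sigma$EC) for every operator $\sigma$ on $\mathcal{H}$. The converse implications do not hold in general: there exist (e.g. for $m=3$, $n=2$, $\sigma=\mathrm{diag}(1,-1)$) states that are RSC but not SSC, and states that are $\sigma$EC but not RSC.
   Context: For $X$ an operator on $\mathcal{H}$, $X^{(i)}=I^{\otimes(i-1)}\otimes X\otimes I^{\otimes(m-i)}$. For a permutation $\pi$ of $\{1,\dots,m\}$, $U_\pi$ is the unitary on $\mathcal{H}^{\otimes m}$ with $U_\pi(X_1\otimes\cdots\otimes X_m)U_\pi^\dagger=X_{\pi(1)}\otimes\cdots\otimes X_{\pi(m)}$ for all operators $X_i$. Definitions: $\rho$ is $\sigma$EC if $\mathrm{Tr}(\sigma^{(1)}\rho)=\cdots=\mathrm{Tr}(\sigma^{(m)}\rho)$; $\rho$ is RSC if the reduced states $\bar\rho_k=\mathrm{Tr}_{\bigotimes_{j\neq k}\mathcal{H}_j}(\rho)$ (partial trace over all factors except the $k$-th) satisfy $\bar\rho_1=\cdots=\bar\rho_m$; $\rho$ is SSC if $U_\pi\rho U_\pi^\dagger=\rho$ for every permutation $\pi$. *)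

theory Defs
  imports Complex_Main "HOL-Library.FuncSet" "HOL-Library.Complex_Order"
    "HOL-Combinatorics.Permutations"
begin

text \<open>Concrete model.  \<H> = C^n with orthonormal basis indexed by {0..<n}.
  The tensor power \<H>^{\<otimes>m} has the product basis indexed by the multi-indices
  x \<in> idx n m = PiE {0..<m} (\<lambda>_. {0..<n}).  Operators on \<H> are matrices
  nat \<Rightarrow> nat \<Rightarrow> complex (only entries on {0..<n} matter); operators on
  \<H>^{\<otimes>m} are matrices (nat \<Rightarrow> nat) \<Rightarrow> (nat \<Rightarrow> nat) \<Rightarrow> complex
  (only entries on idx n m matter).\<close>

definition idx :: "nat \<Rightarrow> nat \<Rightarrow> (nat \<Rightarrow> nat) set" where
  "idx n m = PiE {0..<m} (\<lambda>_. {0..<n})"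

type_synonym bop = "(nat \<Rightarrow> nat) \<Rightarrow> (nat \<Rightarrow> nat) \<Rightarrow> complex"

definition mmul :: "nat \<Rightarrow> nat \<Rightarrow> bop \<Rightarrow> bop \<Rightarrow> bop" where
  "mmul n m A B = (\<lambda>x y. \<Sum>z\<in>idx n m. A x z * B z y)"

definition adj :: "bop \<Rightarrow> bop" where
  "adj A = (\<lambda>x y. cnj (A y x))"

definition tr :: "nat \<Rightarrow> nat \<Rightarrow> bop \<Rightarrow> complex" where
  "tr n m A = (\<Sum>x\<in>idx n m. A x x)"

definition density :: "nat \<Rightarrow> nat \<Rightarrow> bop \<Rightarrow> bool" where
  "density n m \<rho> \<longleftrightarrow>
     (\<forall>v :: (nat \<Rightarrow> nat) \<Rightarrow> complex.
        0 \<le> (\<Sum>x\<in>idx n m. \<Sum>y\<in>idx n m. cnj (v x) * \<rho> x y * v y))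
     \<and> tr n m \<rho> = 1"

definition tensor :: "nat \<Rightarrow> (nat \<Rightarrow> nat \<Rightarrow> nat \<Rightarrow> complex) \<Rightarrow> bop" where
  "tensor m X = (\<lambda>x y. \<Prod>j<m. X j (x j) (y j))"

definition idop :: "nat \<Rightarrow> nat \<Rightarrow> complex" where
  "idop a b = (if a = b then 1 else 0)"

text \<open>X^{(i)} = I \<otimes> ... \<otimes> X \<otimes> ... \<otimes> I (X in slot i, 0-based).\<close>
definition embed :: "nat \<Rightarrow> nat \<Rightarrow> (nat \<Rightarrow> nat \<Rightarrow> complex) \<Rightarrow> bop" where
  "embed m i X = tensor m (\<lambda>j. if j = i then X else idop)"

text \<open>Permutation unitary: matrix entries U_\<pi>(x,y) = [y = x \<circ> \<pi>^{-1}], i.e. U_\<pi> e_y = e_{y \<circ> \<pi>}; it satisfies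
  U_\<pi> (X_0 \<otimes> ... \<otimes> X_{m-1}) U_\<pi>^\<dagger> = X_{\<pi> 0} \<otimes> ... \<otimes> X_{\<pi> (m-1)}.\<close>
definition Uperm :: "(nat \<Rightarrow> nat) \<Rightarrow> bop" where
  "Uperm \<pi> = (\<lambda>x y. if y = x \<circ> inv \<pi> then 1 else 0)"

definition reduced :: "nat \<Rightarrow> nat \<Rightarrow> bop \<Rightarrow> nat \<Rightarrow> nat \<Rightarrow> nat \<Rightarrow> complex" where
  "reduced n m \<rho> k = (\<lambda>a b.
     \<Sum>z\<in>PiE ({0..<m} - {k}) (\<lambda>_. {0..<n}). \<rho> (z(k := a)) (z(k := b)))"

definition sigmaEC :: "nat \<Rightarrow> nat \<Rightarrow> (nat \<Rightarrow> nat \<Rightarrow> complex) \<Rightarrow> bop \<Rightarrow> bool" where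
  "sigmaEC n m \<sigma> \<rho> \<longleftrightarrow>
     (\<forall>i<m. \<forall>j<m. tr n m (mmul n m (embed m i \<sigma>) \<rho>) = tr n m (mmul n m (embed m j \<sigma>) \<rho>))"

definition RSC :: "nat \<Rightarrow> nat \<Rightarrow> bop \<Rightarrow> bool" where
  "RSC n m \<rho> \<longleftrightarrow>
     (\<forall>k<m. \<forall>l<m. \<forall>a<n. \<forall>b<n. reduced n m \<rho> k a b = reduced n m \<rho> l a b)"

definition SSC :: "nat \<Rightarrow> nat \<Rightarrow> bop \<Rightarrow> bool" where
  "SSC n m \<rho> \<longleftrightarrow>
     (\<forall>\<pi>. \<pi> permutes {0..<m} \<longrightarrow>
        (\<forall>x\<in>idx n m. \<forall>y\<in>idx n m.
           mmul n m (mmul n m (Uperm \<pi>) \<rho>) (adj (Uperm \<pi>)) x y = \<rho> x y))"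

definition pauliZ :: "nat \<Rightarrow> nat \<Rightarrow> complex" where
  "pauliZ a b = (if a = b then (if a = 0 then 1 else -1) else 0)"

end

theory Submission imports Defs begin

lemma idx_mem: "x \<in> idx n m \<longleftrightarrow> (\<forall>i<m. x i < n) \<and> (\<forall>i. i \<ge> m \<longrightarrow> x i = undefined)"
  by (auto simp: idx_def PiE_iff extensional_def)

lemma finite_idx[simp]: "finite (idx n m)"
  by (simp add: idx_def finite_PiE)

lemma idx_comp: assumes "p permutes {0..<m}" "x \<in> idx n m" shows "x \<circ> p \<in> idx n m"
  unfolding idx_mem
proof (intro conjI allI impI)
  fix i assume "i < m"
  hence "p i < m" using permutes_in_image[OF assms(1)] by auto
  thus "(x \<circ> p) i < n" using assms(2) by (simp add: idx_mem)
next
  fix i assume "m \<le> i"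
  hence "p i = i" using permutes_not_in[OF assms(1)] by auto
  thus "(x \<circ> p) i = undefined" using assms(2) \<open>m \<le> i\<close> by (simp add: idx_mem)
qed

lemma idx_upd: "x \<in> idx n m \<Longrightarrow> k < m \<Longrightarrow> b < n \<Longrightarrow> x(k:=b) \<in> idx n m"
  by (auto simp: idx_mem)

lemma PiE_minus_mem: "(z::nat\<Rightarrow>nat) \<in> PiE ({0..<m}-{k}) (\<lambda>_. {0..<n}) \<longleftrightarrow>
   (\<forall>i. i < m \<and> i \<noteq> k \<longrightarrow> z i < n) \<and> (\<forall>i. (i \<ge> m \<or> i = k) \<longrightarrow> z i = undefined)"
proof -
  have "z \<in> PiE ({0..<m}-{k}) (\<lambda>_. {0..<n}) \<longleftrightarrow>
     (\<forall>i. i \<in> {0..<m}-{k} \<longrightarrow> z i \<in> {0..<n}) \<and> (\<forall>i. i \<notin> {0..<m}-{k} \<longrightarrow> z i = undefined)"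
    by (auto simp: PiE_iff extensional_def)
  also have "\<dots> \<longleftrightarrow> (\<forall>i. i < m \<and> i \<noteq> k \<longrightarrow> z i < n) \<and> (\<forall>i. (i \<ge> m \<or> i = k) \<longrightarrow> z i = undefined)"
    by (auto simp: not_less)
  finally show ?thesis .
qed

lemma sum_idx_split:
  assumes "k < m"
  shows "(\<Sum>x\<in>idx n m. f x) = (\<Sum>z\<in>PiE ({0..<m}-{k}) (\<lambda>_. {0..<n}). \<Sum>c<n. f (z(k:=c)))"
proof -
  let ?P = "PiE ({0..<m}-{k}) (\<lambda>_. {0..<n})"
  have "(\<Sum>z\<in>?P. \<Sum>c<n. f (z(k:=c))) = (\<Sum>(z,c)\<in>?P \<times> {..<n}. f (z(k:=c)))"
    by (simp add: sum.cartesian_product)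
  also have "\<dots> = (\<Sum>x\<in>idx n m. f x)"
  proof (rule sum.reindex_bij_witness[where i="\<lambda>x. (x(k:=undefined), x k)" and j="\<lambda>(z,c). z(k:=c)"])
    fix x assume x: "x \<in> idx n m"
    have "x(k:=undefined) \<in> ?P" unfolding PiE_minus_mem using x assms by (simp add: idx_mem)
    moreover have "x k < n" using x assms by (simp add: idx_mem)
    ultimately show "(x(k:=undefined), x k) \<in> ?P \<times> {..<n}" by simp
  next
    fix a assume a: "a \<in> ?P \<times> {..<n}"
    obtain z c where zc: "a = (z,c)" "z \<in> ?P" "c < n" using a by auto
    show "(case a of (z,c) \<Rightarrow> z(k:=c)) \<in> idx n m"
      using zc assms unfolding idx_mem PiE_minus_mem by auto
    have "(z(k:=c))(k:=undefined) = z" using zc(2) unfolding PiE_minus_mem by (auto simp: fun_eq_iff)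
    then show "(\<lambda>x. (x(k:=undefined), x k)) (case a of (z,c) \<Rightarrow> z(k:=c)) = a"
      using zc by simp
    show "f (case a of (z,c) \<Rightarrow> z(k:=c)) = (case a of (z,c) \<Rightarrow> f (z(k:=c)))"
      using zc by simp
  next
    fix b assume "b \<in> idx n m" thus "(case (b(k:=undefined), b k) of (z,c) \<Rightarrow> z(k:=c)) = b" by simp
  qed
  finally show ?thesis by simp
qed

lemma delta1: "finite S \<Longrightarrow> a \<in> S \<Longrightarrow> (\<Sum>z\<in>S. (if z = a then 1 else 0) * (f z::complex)) = f a"
proof -
  assume "finite S" "a \<in> S"
  have "(\<Sum>z\<in>S. (if z = a then 1 else 0) * f z) = (\<Sum>z\<in>S. if z = a then f z else 0)"
    by (rule sum.cong) auto
  also have "\<dots> = f a" using \<open>finite S\<close> \<open>a \<in> S\<close> by (simp add: sum.delta)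
  finally show ?thesis .
qed

lemma delta2: "finite S \<Longrightarrow> a \<in> S \<Longrightarrow> (\<Sum>z\<in>S. (f z::complex) * cnj (if z = a then 1 else 0)) = f a"
proof -
  assume "finite S" "a \<in> S"
  have "(\<Sum>z\<in>S. f z * cnj (if z = a then 1 else 0)) = (\<Sum>z\<in>S. if z = a then f z else 0)"
    by (rule sum.cong) auto
  also have "\<dots> = f a" using \<open>finite S\<close> \<open>a \<in> S\<close> by (simp add: sum.delta)
  finally show ?thesis .
qed

lemma Uperm_conj:
  assumes p: "p permutes {0..<m}" and x: "x \<in> idx n m" and y: "y \<in> idx n m"
  shows "mmul n m (mmul n m (Uperm p) \<rho>) (adj (Uperm p)) x y = \<rho> (x \<circ> inv p) (y \<circ> inv p)"
proof -
  have ip: "inv p permutes {0..<m}" using p by (rule permutes_inv)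
  have xi: "x \<circ> inv p \<in> idx n m" and yi: "y \<circ> inv p \<in> idx n m" using idx_comp[OF ip] x y by auto
  have 1: "mmul n m (Uperm p) \<rho> x w = \<rho> (x \<circ> inv p) w" for w
    unfolding mmul_def Uperm_def by (rule delta1[OF finite_idx xi])
  show ?thesis
  proof -
    have "mmul n m (mmul n m (Uperm p) \<rho>) (adj (Uperm p)) x y
        = (\<Sum>w\<in>idx n m. mmul n m (Uperm p) \<rho> x w * adj (Uperm p) w y)"
      by (simp add: mmul_def[of n m "mmul n m (Uperm p) \<rho>"])
    also have "\<dots> = (\<Sum>w\<in>idx n m. \<rho> (x \<circ> inv p) w * cnj (if w = y \<circ> inv p then 1 else 0))"
      by (simp only: 1 adj_def) (simp only: Uperm_def)
    also have "\<dots> = \<rho> (x \<circ> inv p) (y \<circ> inv p)" by (rule delta2[OF finite_idx yi])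
    finally show ?thesis .
  qed
qed

lemma reduced_idx:
  assumes "k < m" "a < n"
  shows "reduced n m \<rho> k a b = (\<Sum>x\<in>idx n m. if x k = a then \<rho> x (x(k:=b)) else 0)"
proof -
  have "(\<Sum>x\<in>idx n m. if x k = a then \<rho> x (x(k:=b)) else 0)
     = (\<Sum>z\<in>PiE ({0..<m}-{k}) (\<lambda>_. {0..<n}). \<Sum>c<n. if c = a then \<rho> (z(k:=c)) (z(k:=b)) else 0)"
    unfolding sum_idx_split[OF assms(1), where n=n] by (intro sum.cong refl) simp
  also have "\<dots> = (\<Sum>z\<in>PiE ({0..<m}-{k}) (\<lambda>_. {0..<n}). \<rho> (z(k:=a)) (z(k:=b)))"
    using assms(2) by (intro sum.cong refl) (simp add: sum.delta)
  finally show ?thesis by (simp add: reduced_def)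
qed

lemma ssc_swap:
  assumes "SSC n m \<rho>" "k < m" "l < m" "x \<in> idx n m" "y \<in> idx n m"
  shows "\<rho> (x \<circ> transpose k l) (y \<circ> transpose k l) = \<rho> x y"
proof -
  have p: "transpose k l permutes {0..<m}" using assms by (intro permutes_swap_id) auto
  have "mmul n m (mmul n m (Uperm (transpose k l)) \<rho>) (adj (Uperm (transpose k l))) x y = \<rho> x y"
    using assms(1) p assms(4,5) unfolding SSC_def by blast
  thus ?thesis using Uperm_conj[OF p assms(4,5)] by simp
qed

lemma ssc_rsc:
  assumes "SSC n m \<rho>" "k < m" "l < m" "a < n" "b < n"
  shows "reduced n m \<rho> k a b = reduced n m \<rho> l a b"
proof -
  let ?t = "transpose k l"
  have p: "?t permutes {0..<m}" using assms by (intro permutes_swap_id) auto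
  have "(\<Sum>x\<in>idx n m. if x l = a then \<rho> x (x(l:=b)) else 0)
      = (\<Sum>x\<in>idx n m. if x k = a then \<rho> x (x(k:=b)) else 0)"
  proof (rule sum.reindex_bij_witness[where i="\<lambda>x. x \<circ> ?t" and j="\<lambda>x. x \<circ> ?t"])
    fix x assume x: "x \<in> idx n m"
    show "x \<circ> ?t \<circ> ?t = x" by (simp add: comp_assoc)
    show "x \<circ> ?t \<in> idx n m" by (rule idx_comp[OF p x])
    have xb: "x(l:=b) \<in> idx n m" using idx_upd[OF x assms(3,5)] .
    have e: "(x \<circ> ?t)(k:=b) = x(l:=b) \<circ> ?t"
    proof (rule ext)
      fix j show "((x \<circ> ?t)(k:=b)) j = (x(l:=b) \<circ> ?t) j"
      proof (cases "j = k")
        case True thus ?thesis by simp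
      next
        case False
        hence "?t j \<noteq> l" unfolding transpose_def by auto
        thus ?thesis using False by simp
      qed
    qed
    have "\<rho> (x \<circ> ?t) ((x \<circ> ?t)(k:=b)) = \<rho> x (x(l:=b))"
      unfolding e by (rule ssc_swap[OF assms(1-3) x xb])
    thus "(if (x \<circ> ?t) k = a then \<rho> (x \<circ> ?t) ((x \<circ> ?t)(k:=b)) else 0)
        = (if x l = a then \<rho> x (x(l:=b)) else 0)" by simp
  next
    fix x assume x: "x \<in> idx n m"
    show "x \<circ> ?t \<circ> ?t = x" by (simp add: comp_assoc)
    show "x \<circ> ?t \<in> idx n m" by (rule idx_comp[OF p x])
  qed
  thus ?thesis unfolding reduced_idx[OF assms(2,4)] reduced_idx[OF assms(3,4)] by (rule sym)
qed

lemma embed_diag: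
  assumes "i < m"
  shows "embed m i \<sigma> x (x(i:=b)) = \<sigma> (x i) b"
proof -
  have "embed m i \<sigma> x (x(i:=b)) = (\<Prod>j<m. (if j = i then \<sigma> else idop) (x j) ((x(i:=b)) j))"
    by (simp add: embed_def tensor_def)
  also have "\<dots> = (if i = i then \<sigma> else idop) (x i) ((x(i:=b)) i) *
      (\<Prod>j\<in>{..<m}-{i}. (if j = i then \<sigma> else idop) (x j) ((x(i:=b)) j))"
    using assms by (intro prod.remove) auto
  also have "\<dots> = \<sigma> (x i) b"
  proof -
    have "(\<Prod>j\<in>{..<m}-{i}. (if j = i then \<sigma> else idop) (x j) ((x(i:=b)) j)) = 1"
      by (intro prod.neutral) (auto simp: idop_def)
    thus ?thesis by simp
  qed
  finally show ?thesis .
qed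

lemma embed_off:
  assumes "j < m" "j \<noteq> i" "x j \<noteq> z j"
  shows "embed m i \<sigma> x z = 0"
  unfolding embed_def tensor_def
  using assms by (intro prod_zero) (auto simp: idop_def intro!: bexI[of _ j])

lemma embed_row:
  assumes i: "i < m" and x: "x \<in> idx n m"
  shows "(\<Sum>z\<in>idx n m. embed m i \<sigma> x z * \<rho> z x) = (\<Sum>b<n. \<sigma> (x i) b * \<rho> (x(i:=b)) x)"
proof -
  let ?S = "(\<lambda>b. x(i:=b)) ` {..<n}"
  have sub: "?S \<subseteq> idx n m" using idx_upd[OF x i] by auto
  have "(\<Sum>z\<in>idx n m. embed m i \<sigma> x z * \<rho> z x) = (\<Sum>z\<in>?S. embed m i \<sigma> x z * \<rho> z x)"
  proof (rule sum.mono_neutral_right[OF finite_idx sub], rule ballI)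
    fix z assume z: "z \<in> idx n m - ?S"
    have "\<exists>j<m. j \<noteq> i \<and> x j \<noteq> z j"
    proof (rule ccontr)
      assume "\<not> ?thesis"
      hence agree: "\<And>j. j < m \<Longrightarrow> j \<noteq> i \<Longrightarrow> x j = z j" by blast
      have "z = x(i := z i)"
      proof (rule ext)
        fix j show "z j = (x(i := z i)) j"
        proof (cases "j < m")
          case True thus ?thesis using agree by (cases "j = i") auto
        next
          case False thus ?thesis using z x i by (auto simp: idx_mem)
        qed
      qed
      moreover have "z i < n" using z i by (auto simp: idx_mem)
      ultimately have "z \<in> ?S" by blast
      thus False using z by blast
    qed
    then obtain j where "j < m" "j \<noteq> i" "x j \<noteq> z j" by blast
    thus "embed m i \<sigma> x z * \<rho> z x = 0" using embed_off by simp
  qed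
  also have "\<dots> = (\<Sum>b<n. embed m i \<sigma> x (x(i:=b)) * \<rho> (x(i:=b)) x)"
  proof (rule sum.reindex_cong[where l="\<lambda>b. x(i:=b)"])
    show "inj_on (\<lambda>b. x(i:=b)) {..<n}" by (rule inj_onI) (metis fun_upd_same)
  qed auto
  also have "\<dots> = (\<Sum>b<n. \<sigma> (x i) b * \<rho> (x(i:=b)) x)" by (simp add: embed_diag[OF i])
  finally show ?thesis .
qed

lemma tr_embed:
  assumes i: "i < m"
  shows "tr n m (mmul n m (embed m i \<sigma>) \<rho>) = (\<Sum>c<n. \<Sum>b<n. \<sigma> c b * reduced n m \<rho> i b c)"
proof -
  let ?P = "PiE ({0..<m}-{i}) (\<lambda>_. {0..<n})"
  have "tr n m (mmul n m (embed m i \<sigma>) \<rho>) = (\<Sum>x\<in>idx n m. \<Sum>b<n. \<sigma> (x i) b * \<rho> (x(i:=b)) x)"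
    unfolding tr_def mmul_def by (intro sum.cong refl embed_row[OF i])
  also have "\<dots> = (\<Sum>w\<in>?P. \<Sum>c<n. \<Sum>b<n. \<sigma> c b * \<rho> (w(i:=b)) (w(i:=c)))"
    unfolding sum_idx_split[OF i, where n=n] by (intro sum.cong refl) simp
  also have "\<dots> = (\<Sum>c<n. \<Sum>b<n. \<Sum>w\<in>?P. \<sigma> c b * \<rho> (w(i:=b)) (w(i:=c)))"
    by (simp add: sum.swap[of _ ?P])
  also have "\<dots> = (\<Sum>c<n. \<Sum>b<n. \<sigma> c b * reduced n m \<rho> i b c)"
    by (simp add: reduced_def sum_distrib_left)
  finally show ?thesis .
qed

lemma sum_idx_Suc: "(\<Sum>x\<in>idx n (Suc m). f x) = (\<Sum>x\<in>idx n m. \<Sum>a<n. f (x(m:=a)))"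
proof -
  have e: "{0..<Suc m} - {m} = {0..<m}" by auto
  show ?thesis unfolding sum_idx_split[where k=m and m="Suc m" and n=n and f=f, OF lessI] e
    by (simp add: idx_def)
qed

lemma sum_idx23: "(\<Sum>x\<in>idx 2 3. f x) =
  (\<Sum>a<2. \<Sum>b<2. \<Sum>c<2. f ((\<lambda>_. undefined)(0:=a, 1:=b, 2:=c)))"
proof -
  have i0: "idx 2 0 = {\<lambda>_. undefined}" by (simp add: idx_def)
  have "(\<Sum>x\<in>idx 2 3. f x) = (\<Sum>x\<in>idx 2 (Suc (Suc (Suc 0))). f x)"
    by (simp only: numeral_3_eq_3)
  also have "\<dots> = (\<Sum>x\<in>idx 2 0. \<Sum>a<2. \<Sum>b<2. \<Sum>c<2. f (x(0:=a, Suc 0:=b, Suc (Suc 0):=c)))"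
    unfolding sum_idx_Suc by (rule refl)
  also have "\<dots> = (\<Sum>a<2. \<Sum>b<2. \<Sum>c<2. f ((\<lambda>_. undefined)(0:=a, Suc 0:=b, Suc (Suc 0):=c)))"
    unfolding i0 by (simp only: sum.insert finite.emptyI empty_iff not_False_eq_True sum.empty add_0_right)
  also have "Suc 0 = (1::nat)" by simp
  also have "Suc 1 = (2::nat)" by simp
  finally show ?thesis .
qed

lemma psd_rank1:
  assumes "r \<ge> 0"
  shows "0 \<le> (\<Sum>x\<in>S. \<Sum>y\<in>S. cnj (v x) * (complex_of_real r * \<phi> x * cnj (\<phi> y)) * v y)"
proof -
  define s where "s = (\<Sum>x\<in>S. cnj (v x) * \<phi> x)"
  have cs: "cnj s = (\<Sum>y\<in>S. v y * cnj (\<phi> y))" by (simp add: s_def)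
  have "(\<Sum>x\<in>S. \<Sum>y\<in>S. cnj (v x) * (complex_of_real r * \<phi> x * cnj (\<phi> y)) * v y)
     = (\<Sum>x\<in>S. \<Sum>y\<in>S. (complex_of_real r * (cnj (v x) * \<phi> x)) * (v y * cnj (\<phi> y)))"
    by (intro sum.cong refl) (simp add: mult_ac)
  also have "\<dots> = (\<Sum>x\<in>S. complex_of_real r * (cnj (v x) * \<phi> x)) * (\<Sum>y\<in>S. v y * cnj (\<phi> y))"
    by (rule sum_product[symmetric])
  also have "\<dots> = complex_of_real r * (s * cnj s)"
    unfolding cs s_def by (simp add: sum_distrib_left[symmetric] mult.assoc)
  also have "\<dots> = complex_of_real (r * ((Re s)\<^sup>2 + (Im s)\<^sup>2))"
    by (simp only: complex_mult_cnj of_real_mult)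
  also have "0 \<le> \<dots>" using assms by (simp add: less_eq_complex_def)
  finally show ?thesis by simp
qed

definition phi1 :: "(nat \<Rightarrow> nat) \<Rightarrow> complex" where
  "phi1 x = (if x 0 = 0 \<and> x 1 = 0 \<and> x 2 = 1 then 1 else 0) + (if x 0 = 1 \<and> x 1 = 1 \<and> x 2 = 0 then 1 else 0)"
definition rho1 :: bop where "rho1 x y = complex_of_real (1/2) * phi1 x * cnj (phi1 y)"

definition phi2 :: "(nat \<Rightarrow> nat) \<Rightarrow> complex" where
  "phi2 x = \<i> ^ x 1"
definition rho2 :: bop where "rho2 x y = complex_of_real (1/8) * phi2 x * cnj (phi2 y)"

lemma density1: "density 2 3 rho1"
  unfolding density_def
proof
  show "\<forall>v. 0 \<le> (\<Sum>x\<in>idx 2 3. \<Sum>y\<in>idx 2 3. cnj (v x) * rho1 x y * v y)"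
    unfolding rho1_def by (intro allI psd_rank1) simp
  show "tr 2 3 rho1 = 1"
    unfolding tr_def sum_idx23 by (simp add: rho1_def phi1_def numeral_2_eq_2)
qed

lemma density2: "density 2 3 rho2"
  unfolding density_def
proof
  show "\<forall>v. 0 \<le> (\<Sum>x\<in>idx 2 3. \<Sum>y\<in>idx 2 3. cnj (v x) * rho2 x y * v y)"
    unfolding rho2_def by (intro allI psd_rank1) simp
  show "tr 2 3 rho2 = 1"
    unfolding tr_def sum_idx23 by (simp add: rho2_def phi2_def numeral_2_eq_2)
qed

lemma red1:
  assumes "k < 3" "a < 2" "b < 2"
  shows "reduced 2 3 rho1 k a b = (if a = b then 1/2 else 0)"
proof -
  have k: "k = 0 \<or> k = 1 \<or> k = 2" and a: "a = 0 \<or> a = 1" and b: "b = 0 \<or> b = 1" using assms by auto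
  show ?thesis unfolding reduced_idx[OF assms(1,2)] sum_idx23
    using k a b by (elim disjE) (simp_all add: rho1_def phi1_def numeral_2_eq_2)
qed

lemma red2:
  assumes "k < 3" "a < 2" "b < 2"
  shows "reduced 2 3 rho2 k a b = (if k = 1 then \<i> ^ a * cnj (\<i> ^ b) / 2 else 1/2)"
proof -
  have k: "k = 0 \<or> k = 1 \<or> k = 2" and a: "a = 0 \<or> a = 1" and b: "b = 0 \<or> b = 1" using assms by auto
  show ?thesis unfolding reduced_idx[OF assms(1,2)] sum_idx23
    using k a b by (elim disjE) (simp_all add: rho2_def phi2_def numeral_2_eq_2)
qed

lemma l2: "{..<2::nat} = {0,1}" by auto

lemma tr_zero2: "i < 3 \<Longrightarrow> tr 2 3 (mmul 2 3 (embed 3 i pauliZ) rho2) = 0"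
  by (simp add: tr_embed l2 pauliZ_def red2)

lemma ex2: "density 2 3 rho2 \<and> sigmaEC 2 3 pauliZ rho2 \<and> \<not> RSC 2 3 rho2"
proof (intro conjI)
  show "density 2 3 rho2" by (rule density2)
  show "sigmaEC 2 3 pauliZ rho2" unfolding sigmaEC_def by (simp add: tr_zero2)
  show "\<not> RSC 2 3 rho2"
  proof
    assume "RSC 2 3 rho2"
    hence "reduced 2 3 rho2 0 0 1 = reduced 2 3 rho2 1 0 1" unfolding RSC_def by simp
    thus False by (simp add: red2 complex_eq_iff)
  qed
qed

lemma ex1: "density 2 3 rho1 \<and> RSC 2 3 rho1 \<and> \<not> SSC 2 3 rho1"
proof (intro conjI)
  show "density 2 3 rho1" by (rule density1)
  show "RSC 2 3 rho1" unfolding RSC_def by (simp add: red1)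
  show "\<not> SSC 2 3 rho1"
  proof
    assume S: "SSC 2 3 rho1"
    let ?t = "transpose (0::nat) 2"
    let ?x = "(\<lambda>_. undefined)(0:=0, 1:=0, 2:=1) :: nat \<Rightarrow> nat"
    have p: "?t permutes {0..<3}" by (intro permutes_swap_id) auto
    have x: "?x \<in> idx 2 3"
    proof -
      have "\<forall>i<3. ?x i < 2"
      proof (intro allI impI)
        fix i :: nat assume "i < 3"
        hence "i = 0 \<or> i = 1 \<or> i = 2" by auto
        thus "?x i < 2" by (elim disjE) simp_all
      qed
      moreover have "\<forall>i. i \<ge> 3 \<longrightarrow> ?x i = undefined" by auto
      ultimately show ?thesis by (simp add: idx_mem)
    qed
    have "mmul 2 3 (mmul 2 3 (Uperm ?t) rho1) (adj (Uperm ?t)) ?x ?x = rho1 ?x ?x"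
      using S p x unfolding SSC_def by blast
    hence "rho1 (?x \<circ> ?t) (?x \<circ> ?t) = rho1 ?x ?x" using Uperm_conj[OF p x x] by simp
    thus False by (simp add: rho1_def phi1_def)
  qed
qed

theorem theorem1:
  fixes n m :: nat
  assumes "n \<ge> 2" and "m \<ge> 2"
  shows "(\<forall>\<rho>. density n m \<rho> \<longrightarrow>
            (SSC n m \<rho> \<longrightarrow> RSC n m \<rho>) \<and>
            (RSC n m \<rho> \<longrightarrow> (\<forall>\<sigma>. sigmaEC n m \<sigma> \<rho>)))
       \<and> (\<exists>\<rho>. density 2 3 \<rho> \<and> RSC 2 3 \<rho> \<and> \<not> SSC 2 3 \<rho>)
       \<and> (\<exists>\<rho>. density 2 3 \<rho> \<and> sigmaEC 2 3 pauliZ \<rho> \<and> \<not> RSC 2 3 \<rho>)"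
proof -
  have A: "\<forall>\<rho>. density n m \<rho> \<longrightarrow>
            (SSC n m \<rho> \<longrightarrow> RSC n m \<rho>) \<and>
            (RSC n m \<rho> \<longrightarrow> (\<forall>\<sigma>. sigmaEC n m \<sigma> \<rho>))"
  proof (intro allI impI conjI)
    fix \<rho> assume S: "SSC n m \<rho>"
    show "RSC n m \<rho>" unfolding RSC_def
    proof (intro allI impI)
      fix k l a b assume "k < m" "l < m" "a < n" "b < n"
      thus "reduced n m \<rho> k a b = reduced n m \<rho> l a b" by (rule ssc_rsc[OF S])
    qed
  next
    fix \<rho> \<sigma> assume R: "RSC n m \<rho>"
    show "sigmaEC n m \<sigma> \<rho>" unfolding sigmaEC_def
    proof (intro allI impI)
      fix i j assume ij: "i < m" "j < m"
      have "(\<Sum>c<n. \<Sum>b<n. \<sigma> c b * reduced n m \<rho> i b c) = (\<Sum>c<n. \<Sum>b<n. \<sigma> c b * reduced n m \<rho> j b c)"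
      proof (rule sum.cong[OF refl], rule sum.cong[OF refl])
        fix c b assume "c \<in> {..<n}" "b \<in> {..<n}"
        hence bc: "b < n" "c < n" by auto
        have "reduced n m \<rho> i b c = reduced n m \<rho> j b c" using R ij bc unfolding RSC_def by blast
        thus "\<sigma> c b * reduced n m \<rho> i b c = \<sigma> c b * reduced n m \<rho> j b c" by simp
      qed
      thus "tr n m (mmul n m (embed m i \<sigma>) \<rho>) = tr n m (mmul n m (embed m j \<sigma>) \<rho>)"
        by (simp only: tr_embed[OF ij(1)] tr_embed[OF ij(2)])
    qed
  qed
  show ?thesis using A ex1 ex2 by blast
qed

end
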